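(* $\mathcal{S}=\mathcal{F}(0)\supseteq\mathcal{F}(1)\supseteq\mathcal{F}(2)\supseteq\cdots\supseteq\mathcal{F}(\bar{k})=\mathcal{F}$.
   Context: Data: $d^2\in\mathbb{Q}^{n_2}$; $A^1\in\mathbb{Q}^{m_1\times n_1}$, $G^1\in\mathbb{Q}^{m_1\times n_2}$, $b^1\in\mathbb{Q}^{m_1}$; $A^2\in\mathbb{Q}^{m_2\times n_1}$, $G^2\in\mathbb{Q}^{m_2\times n_2}$, $b^2\in\mathbb{Q}^{m_2}$; integers $0\le r_1\le n_1$, $0\le r_2\le n_2$. Let $X=\mathbb{Z}_+^{r_1}\times\mathbb{R}_+^{n_1-r_1}$, $Y=\mathbb{Z}_+^{r_2}\times\mathbb{R}_+^{n_2-r_2}$, $\mathcal{P}_1(x)=\{y\in\mathbb{R}_+^{n_2}: G^1y\ge b^1-A^1x\}$, $\mathcal{P}_2(x)=\{y\in\mathbb{R}_+^{n_2}: G^2y\ge b^2-A^2x\}$, $\mathcal{P}=\{(x,y)\in\mathbb{R}_+^{n_1}\times\mathbb{R}_+^{n_2}: y\in\mathcal{P}_1(x)\cap\mathcal{P}_2(x)\}$, $\mathcal{S}=\mathcal{P}\cap(X\times Y)$. Standing assumptions: $\mathcal{P}$ is bounded; leader variables appearing in the follower's constraints are integer; $A^2x+G^2y-b^2\in\mathbb{Z}^{m_2}$ for all $(x,y)\in\mathcal{S}$ and $d^2\in\mathbb{Z}^{n_2}$. For $x\in X$ let $\mathcal{S}(x)=Y\cap\mathcal{P}_1(x)\cap\mathcal{P}_2(x)$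 and $\mathcal{R}(x)=\{y\in\mathcal{S}(x): d^2y\le d^2\bar{y}\ \forall\bar{y}\in\mathcal{S}(x)\}$; $\mathcal{F}=\{(x,y): x\in X,\ y\in\mathcal{R}(x)\}$. For $y\in Y$ and integer $k\ge0$, $\mathcal{N}_k(y)=\{\bar{y}\in Y:\|\bar{y}-y\|_1\le k\}$, $\mathcal{R}(x;k)=\{y\in\mathcal{S}(x): d^2y\le d^2\bar{y}\ \forall\bar{y}\in\mathcal{N}_k(y)\cap\mathcal{S}(x)\}$, and $\mathcal{F}(k)=\{(x,y): x\in X,\ y\in\mathcal{R}(x;k)\}$. Finally $\bar{k}=\sum_{i=1}^{r_2}\left(\left\lfloor\max_{(x,y)\in\mathcal{P}}y_i\right\rfloor-\left\lceil\min_{(x,y)\in\mathcal{P}}y_i\right\rceil\right)+\sum_{i=r_2+1}^{n_2}\left\lceil\max_{(x,y)\in\mathcal{P}}y_i-\min_{(x,y)\in\mathcal{P}}y_i\right\rceil$. *)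

theory Defs
  imports Complex_Main
begin

text \<open>Vectors in R^n are functions nat => real, indices 0..n-1, zero outside.
  Matrices are functions row => column => rat. Indices are 0-based: the first r
  components (indices < r) are the integer ones.\<close>

record bilevel =
  n1 :: nat
  n2 :: nat
  m1 :: nat
  m2 :: nat
  r1 :: nat
  r2 :: nat
  d2 :: "nat \<Rightarrow> rat"
  A1 :: "nat \<Rightarrow> nat \<Rightarrow> rat"
  G1 :: "nat \<Rightarrow> nat \<Rightarrow> rat"
  b1 :: "nat \<Rightarrow> rat"
  A2 :: "nat \<Rightarrow> nat \<Rightarrow> rat"
  G2 :: "nat \<Rightarrow> nat \<Rightarrow> rat"
  b2 :: "nat \<Rightarrow> rat"

definition matvec :: "(nat \<Rightarrow> nat \<Rightarrow> rat) \<Rightarrow> nat \<Rightarrow> (nat \<Rightarrow> real) \<Rightarrow> nat \<Rightarrow> real" where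
  "matvec A n x j = (\<Sum>i<n. real_of_rat (A j i) * x i)"

definition dotp :: "(nat \<Rightarrow> rat) \<Rightarrow> nat \<Rightarrow> (nat \<Rightarrow> real) \<Rightarrow> real" where
  "dotp d n y = (\<Sum>i<n. real_of_rat (d i) * y i)"

definition l1dist :: "nat \<Rightarrow> (nat \<Rightarrow> real) \<Rightarrow> (nat \<Rightarrow> real) \<Rightarrow> real" where
  "l1dist n u v = (\<Sum>i<n. \<bar>u i - v i\<bar>)"

definition nonneg :: "nat \<Rightarrow> (nat \<Rightarrow> real) set" where
  "nonneg n = {v. (\<forall>i<n. 0 \<le> v i) \<and> (\<forall>i\<ge>n. v i = 0)}"

definition mixset :: "nat \<Rightarrow> nat \<Rightarrow> (nat \<Rightarrow> real) set" where
  "mixset r n = {v. v \<in> nonneg n \<and> (\<forall>i<r. v i \<in> \<int>)}"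

definition XX :: "bilevel \<Rightarrow> (nat \<Rightarrow> real) set" where
  "XX I = mixset (r1 I) (n1 I)"

definition YY :: "bilevel \<Rightarrow> (nat \<Rightarrow> real) set" where
  "YY I = mixset (r2 I) (n2 I)"

definition P1 :: "bilevel \<Rightarrow> (nat \<Rightarrow> real) \<Rightarrow> (nat \<Rightarrow> real) set" where
  "P1 I x = {y \<in> nonneg (n2 I). \<forall>j<m1 I.
      matvec (G1 I) (n2 I) y j \<ge> real_of_rat (b1 I j) - matvec (A1 I) (n1 I) x j}"

definition P2 :: "bilevel \<Rightarrow> (nat \<Rightarrow> real) \<Rightarrow> (nat \<Rightarrow> real) set" where
  "P2 I x = {y \<in> nonneg (n2 I). \<forall>j<m2 I.
      matvec (G2 I) (n2 I) y j \<ge> real_of_rat (b2 I j) - matvec (A2 I) (n1 I) x j}"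

definition PP :: "bilevel \<Rightarrow> ((nat \<Rightarrow> real) \<times> (nat \<Rightarrow> real)) set" where
  "PP I = {(x, y). x \<in> nonneg (n1 I) \<and> y \<in> nonneg (n2 I) \<and> y \<in> P1 I x \<inter> P2 I x}"

definition SS :: "bilevel \<Rightarrow> ((nat \<Rightarrow> real) \<times> (nat \<Rightarrow> real)) set" where
  "SS I = PP I \<inter> (XX I \<times> YY I)"

definition Sx :: "bilevel \<Rightarrow> (nat \<Rightarrow> real) \<Rightarrow> (nat \<Rightarrow> real) set" where
  "Sx I x = YY I \<inter> P1 I x \<inter> P2 I x"

definition Rx :: "bilevel \<Rightarrow> (nat \<Rightarrow> real) \<Rightarrow> (nat \<Rightarrow> real) set" where
  "Rx I x = {y \<in> Sx I x. \<forall>yb \<in> Sx I x. dotp (d2 I) (n2 I) y \<le> dotp (d2 I) (n2 I) yb}"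

definition FF :: "bilevel \<Rightarrow> ((nat \<Rightarrow> real) \<times> (nat \<Rightarrow> real)) set" where
  "FF I = {(x, y). x \<in> XX I \<and> y \<in> Rx I x}"

definition Nk :: "bilevel \<Rightarrow> int \<Rightarrow> (nat \<Rightarrow> real) \<Rightarrow> (nat \<Rightarrow> real) set" where
  "Nk I k y = {yb \<in> YY I. l1dist (n2 I) yb y \<le> real_of_int k}"

definition Rxk :: "bilevel \<Rightarrow> (nat \<Rightarrow> real) \<Rightarrow> int \<Rightarrow> (nat \<Rightarrow> real) set" where
  "Rxk I x k = {y \<in> Sx I x. \<forall>yb \<in> Nk I k y \<inter> Sx I x.
      dotp (d2 I) (n2 I) y \<le> dotp (d2 I) (n2 I) yb}"

definition Fk :: "bilevel \<Rightarrow> int \<Rightarrow> ((nat \<Rightarrow> real) \<times> (nat \<Rightarrow> real)) set" where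
  "Fk I k = {(x, y). x \<in> XX I \<and> y \<in> Rxk I x k}"

definition maxP :: "bilevel \<Rightarrow> nat \<Rightarrow> real" where
  "maxP I i = Sup ((\<lambda>p. snd p i) ` PP I)"

definition minP :: "bilevel \<Rightarrow> nat \<Rightarrow> real" where
  "minP I i = Inf ((\<lambda>p. snd p i) ` PP I)"

definition kbar :: "bilevel \<Rightarrow> int" where
  "kbar I = (\<Sum>i<r2 I. \<lfloor>maxP I i\<rfloor> - \<lceil>minP I i\<rceil>)
          + (\<Sum>i\<in>{r2 I..<n2 I}. \<lceil>maxP I i - minP I i\<rceil>)"

definition P_bounded :: "bilevel \<Rightarrow> bool" where
  "P_bounded I \<longleftrightarrow> (\<exists>B. \<forall>(x, y) \<in> PP I. (\<forall>i. \<bar>x i\<bar> \<le> B) \<and> (\<forall>i. \<bar>y i\<bar> \<le> B))"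

end

theory Submission
  imports Defs
begin

lemma dotp_cong: "(\<forall>i<n. u i = v i) \<Longrightarrow> dotp d n u = dotp d n v"
  unfolding dotp_def by (rule sum.cong) auto

lemma l1_zero: "l1dist n u v \<le> 0 \<Longrightarrow> \<forall>i<n. u i = v i"
proof (intro allI impI)
  fix i assume a: "l1dist n u v \<le> 0" "i < n"
  have "\<bar>u i - v i\<bar> \<le> (\<Sum>i<n. \<bar>u i - v i\<bar>)"
    by (rule member_le_sum) (use a in auto)
  thus "u i = v i" using a unfolding l1dist_def by linarith
qed

lemma PP_bounds:
  assumes "P_bounded I" "p \<in> PP I"
  shows "minP I i \<le> snd p i \<and> snd p i \<le> maxP I i"
proof -
  obtain B where B: "\<forall>(x, y) \<in> PP I. (\<forall>i. \<bar>x i\<bar> \<le> B) \<and> (\<forall>i. \<bar>y i\<bar> \<le> B)"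
    using assms(1) unfolding P_bounded_def by blast
  have bq: "\<bar>snd q i\<bar> \<le> B" if "q \<in> PP I" for q
    using B that by (cases q) auto
  have ba: "bdd_above ((\<lambda>p. snd p i) ` PP I)"
  proof (rule bdd_aboveI)
    fix t assume "t \<in> (\<lambda>p. snd p i) ` PP I"
    then obtain q where "q \<in> PP I" "t = snd q i" by blast
    thus "t \<le> B" using bq[of q] by linarith
  qed
  have bb: "bdd_below ((\<lambda>p. snd p i) ` PP I)"
  proof (rule bdd_belowI)
    fix t assume "t \<in> (\<lambda>p. snd p i) ` PP I"
    then obtain q where "q \<in> PP I" "t = snd q i" by blast
    thus "- B \<le> t" using bq[of q] by linarith
  qed
  show ?thesis unfolding minP_def maxP_def
    using cInf_lower[OF imageI[OF assms(2)] bb] cSup_upper[OF imageI[OF assms(2)] ba] by simp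
qed

lemma int_le_floor: "(a::real) \<in> \<int> \<Longrightarrow> a \<le> b \<Longrightarrow> a \<le> real_of_int \<lfloor>b\<rfloor>"
  by (metis Ints_cases floor_mono floor_of_int of_int_le_iff)

lemma int_ge_ceil: "(a::real) \<in> \<int> \<Longrightarrow> b \<le> a \<Longrightarrow> real_of_int \<lceil>b\<rceil> \<le> a"
  by (metis Ints_cases ceiling_mono ceiling_of_int of_int_le_iff)

lemma dist_kbar:
  assumes "P_bounded I" "r2 I \<le> n2 I" "(x, y) \<in> PP I" "(x, yb) \<in> PP I"
    "y \<in> YY I" "yb \<in> YY I"
  shows "l1dist (n2 I) yb y \<le> real_of_int (kbar I)"
proof -
  let ?r = "r2 I" and ?n = "n2 I"
  have b1: "minP I i \<le> y i \<and> y i \<le> maxP I i" for i using PP_bounds[OF assms(1,3)] by simp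
  have b2: "minP I i \<le> yb i \<and> yb i \<le> maxP I i" for i using PP_bounds[OF assms(1,4)] by simp
  have iy: "\<forall>i<?r. y i \<in> \<int>" "\<forall>i<?r. yb i \<in> \<int>"
    using assms(5,6) unfolding YY_def mixset_def by auto
  have split: "{..<?n} = {..<?r} \<union> {?r..<?n}" using assms(2) by auto
  have "l1dist ?n yb y = (\<Sum>i<?r. \<bar>yb i - y i\<bar>) + (\<Sum>i\<in>{?r..<?n}. \<bar>yb i - y i\<bar>)"
    unfolding l1dist_def split by (subst sum.union_disjoint) auto
  also have "\<dots> \<le> (\<Sum>i<?r. real_of_int (\<lfloor>maxP I i\<rfloor> - \<lceil>minP I i\<rceil>))
      + (\<Sum>i\<in>{?r..<?n}. real_of_int \<lceil>maxP I i - minP I i\<rceil>)"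
  proof (rule add_mono; rule sum_mono)
    fix i assume "i \<in> {..<?r}"
    hence "y i \<in> \<int>" "yb i \<in> \<int>" using iy by auto
    thus "\<bar>yb i - y i\<bar> \<le> real_of_int (\<lfloor>maxP I i\<rfloor> - \<lceil>minP I i\<rceil>)"
    proof -
      have "y i \<le> real_of_int \<lfloor>maxP I i\<rfloor>"
        by (rule int_le_floor[OF \<open>y i \<in> \<int>\<close> conjunct2[OF b1[of i]]])
      moreover have "yb i \<le> real_of_int \<lfloor>maxP I i\<rfloor>"
        by (rule int_le_floor[OF \<open>yb i \<in> \<int>\<close> conjunct2[OF b2[of i]]])
      moreover have "real_of_int \<lceil>minP I i\<rceil> \<le> y i"
        by (rule int_ge_ceil[OF \<open>y i \<in> \<int>\<close> conjunct1[OF b1[of i]]])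
      moreover have "real_of_int \<lceil>minP I i\<rceil> \<le> yb i"
        by (rule int_ge_ceil[OF \<open>yb i \<in> \<int>\<close> conjunct1[OF b2[of i]]])
      ultimately show ?thesis by (simp only: of_int_diff abs_le_iff) linarith
    qed
  next
    fix i assume "i \<in> {?r..<?n}"
    show "\<bar>yb i - y i\<bar> \<le> real_of_int \<lceil>maxP I i - minP I i\<rceil>"
      using b1[of i] b2[of i] le_of_int_ceiling[of "maxP I i - minP I i"] by linarith
  qed
  also have "\<dots> = real_of_int (kbar I)" by (simp only: kbar_def of_int_add of_int_sum)
  finally show ?thesis .
qed

lemma XXn: "x \<in> XX I \<Longrightarrow> x \<in> nonneg (n1 I)"
  unfolding XX_def mixset_def by blast
lemma P1n: "y \<in> P1 I x \<Longrightarrow> y \<in> nonneg (n2 I)"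
  unfolding P1_def by blast

lemma Sx_dist:
  assumes "P_bounded I" "r2 I \<le> n2 I" "x \<in> XX I" "y \<in> Sx I x" "yb \<in> Sx I x"
  shows "yb \<in> Nk I (kbar I) y"
proof -
  have xn: "x \<in> nonneg (n1 I)" using assms(3) by (rule XXn)
  have s: "y \<in> YY I" "y \<in> P1 I x" "y \<in> P2 I x" "yb \<in> YY I" "yb \<in> P1 I x" "yb \<in> P2 I x"
    using assms(4,5) unfolding Sx_def by simp_all
  have "(x, y) \<in> PP I" "(x, yb) \<in> PP I"
    using xn s P1n[of y I x] P1n[of yb I x] unfolding PP_def by simp_all
  hence "l1dist (n2 I) yb y \<le> real_of_int (kbar I)"
    by (rule dist_kbar[OF assms(1,2) _ _ s(1,4)])
  thus ?thesis using s(4) unfolding Nk_def by simp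
qed

lemma Rxk_kbar:
  assumes "P_bounded I" "r2 I \<le> n2 I" "x \<in> XX I"
  shows "Rxk I x (kbar I) = Rx I x"
proof (rule set_eqI)
  fix y
  show "y \<in> Rxk I x (kbar I) \<longleftrightarrow> y \<in> Rx I x"
  proof
    assume "y \<in> Rxk I x (kbar I)"
    then have y: "y \<in> Sx I x" and h: "\<And>yb. yb \<in> Nk I (kbar I) y \<inter> Sx I x \<Longrightarrow>
        dotp (d2 I) (n2 I) y \<le> dotp (d2 I) (n2 I) yb" unfolding Rxk_def by auto
    show "y \<in> Rx I x" unfolding Rx_def
      using y h Sx_dist[OF assms y] by blast
  next
    assume "y \<in> Rx I x"
    thus "y \<in> Rxk I x (kbar I)" unfolding Rx_def Rxk_def by blast
  qed
qed

lemma Fk_kbar: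
  assumes "P_bounded I" "r2 I \<le> n2 I"
  shows "Fk I (kbar I) = FF I"
  unfolding Fk_def FF_def using Rxk_kbar[OF assms] by blast

theorem theorem1:
  fixes I :: bilevel
  assumes "r1 I \<le> n1 I" and "r2 I \<le> n2 I"
    and "P_bounded I"
    and "\<forall>j<m2 I. \<forall>i<n1 I. A2 I j i \<noteq> 0 \<longrightarrow> i < r1 I"
    and "\<forall>(x, y) \<in> SS I. \<forall>j<m2 I.
           matvec (A2 I) (n1 I) x j + matvec (G2 I) (n2 I) y j - real_of_rat (b2 I j) \<in> \<int>"
    and "\<forall>i<n2 I. d2 I i \<in> \<int>"
  shows "SS I = Fk I 0
       \<and> (\<forall>k::int. 0 \<le> k \<and> k < kbar I \<longrightarrow> Fk I (k + 1) \<subseteq> Fk I k)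
       \<and> Fk I (kbar I) = FF I"
proof (intro conjI allI impI)
  have R0: "Rxk I x 0 = Sx I x" for x
  proof -
    have "dotp (d2 I) (n2 I) y \<le> dotp (d2 I) (n2 I) yb" if "yb \<in> Nk I 0 y" for y yb
    proof -
      have "\<forall>i<n2 I. yb i = y i" using that l1_zero[of "n2 I" yb y] unfolding Nk_def by simp
      thus ?thesis using dotp_cong[of "n2 I" yb y] by simp
    qed
    thus ?thesis unfolding Rxk_def by blast
  qed
  show "SS I = Fk I 0"
  proof (rule set_eqI)
    fix p :: "(nat \<Rightarrow> real) \<times> (nat \<Rightarrow> real)"
    obtain x y where p: "p = (x, y)" by (cases p)
    have "p \<in> SS I \<longleftrightarrow> x \<in> XX I \<and> y \<in> Sx I x"
    proof -
      have "p \<in> SS I \<longleftrightarrow> (x \<in> nonneg (n1 I) \<and> y \<in> nonneg (n2 I) \<and> y \<in> P1 I x \<and> y \<in> P2 I x)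
          \<and> x \<in> XX I \<and> y \<in> YY I" by (simp add: p SS_def PP_def)
      moreover have "y \<in> Sx I x \<longleftrightarrow> y \<in> YY I \<and> y \<in> P1 I x \<and> y \<in> P2 I x"
        by (simp add: Sx_def)
      ultimately show ?thesis using XXn[of x I] P1n[of y I x] by blast
    qed
    moreover have "p \<in> Fk I 0 \<longleftrightarrow> x \<in> XX I \<and> y \<in> Sx I x"
      unfolding p Fk_def R0 by simp
    ultimately show "p \<in> SS I \<longleftrightarrow> p \<in> Fk I 0" by simp
  qed
next
  fix k :: int assume "0 \<le> k \<and> k < kbar I"
  have "Nk I k y \<subseteq> Nk I (k+1) y" for y unfolding Nk_def by auto
  hence "Rxk I x (k+1) \<subseteq> Rxk I x k" for x unfolding Rxk_def by blast
  thus "Fk I (k + 1) \<subseteq> Fk I k" unfolding Fk_def by blast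
next
  show "Fk I (kbar I) = FF I" using Fk_kbar[OF assms(3,2)] .
qed

end
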